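(* Let $F=F(N,\mathcal D)$ be a connected GSC and let $i\in\mathcal D$. If there is exactly one word $\mathbf w\in\mathcal D^2$ such that the level-3 cell $\varphi_{i\mathbf w}(F)$ intersects $\bigcup_{j\in\mathcal D\setminus\{i\}}\varphi_j(F)$, then $F$ is fragile.
   Context: GSC: $N\ge2$, $\mathcal D\subset\{0,\dots,N-1\}^2$ with $1<|\mathcal D|<N^2$, $\varphi_i(x)=\frac1N(x+i)$, $F$ the attractor $F=\bigcup_{i\in\mathcal D}\varphi_i(F)$; $\varphi_{i_1\cdots i_k}=\varphi_{i_1}\circ\cdots\circ\varphi_{i_k}$; a level-$k$ cell is a set $\varphi_{\mathbf i}(F)$ with $\mathbf i\in\mathcal D^k$. $F$ is fragile if there is a partition $\mathcal D=\mathcal D_1\cup\mathcal D_2$ into disjoint nonempty sets with $\big(\bigcup_{i\in\mathcal D_1}\varphi_i(F)\big)\cap\big(\bigcup_{i\in\mathcal D_2}\varphi_i(F)\big)$ a singleton. *)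

theory Defs
  imports "HOL-Analysis.Analysis"
begin

definition gsc_digits :: "nat \<Rightarrow> (nat \<times> nat) set \<Rightarrow> bool" where
  "gsc_digits N D \<longleftrightarrow> N \<ge> 2 \<and> D \<subseteq> {0..<N} \<times> {0..<N} \<and> 1 < card D \<and> card D < N^2"

definition phi :: "nat \<Rightarrow> nat \<times> nat \<Rightarrow> real \<times> real \<Rightarrow> real \<times> real" where
  "phi N i x = (1 / real N) *\<^sub>R (x + (real (fst i), real (snd i)))"

fun phiw :: "nat \<Rightarrow> (nat \<times> nat) list \<Rightarrow> real \<times> real \<Rightarrow> real \<times> real" where
  "phiw N [] = id"
| "phiw N (i # w) = phi N i \<circ> phiw N w"

definition is_gsc_attractor :: "nat \<Rightarrow> (nat \<times> nat) set \<Rightarrow> (real \<times> real) set \<Rightarrow> bool" where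
  "is_gsc_attractor N D F \<longleftrightarrow> compact F \<and> F \<noteq> {} \<and> F = (\<Union>i\<in>D. phi N i ` F)"

definition fragile :: "nat \<Rightarrow> (nat \<times> nat) set \<Rightarrow> (real \<times> real) set \<Rightarrow> bool" where
  "fragile N D F \<longleftrightarrow> (\<exists>D1 D2. D1 \<union> D2 = D \<and> D1 \<inter> D2 = {} \<and> D1 \<noteq> {} \<and> D2 \<noteq> {} \<and>
      (\<exists>p. (\<Union>i\<in>D1. phi N i ` F) \<inter> (\<Union>i\<in>D2. phi N i ` F) = {p}))"

end

theory Submission
  imports Defs
begin

lemma phi_Pair: "phi N a x = ((fst x + real (fst a)) / real N, (snd x + real (snd a)) / real N)"
  by (cases x) (simp add: phi_def divide_inverse mult.commute)

lemma phi_inj: "N > 0 \<Longrightarrow> phi N a x = phi N a y \<Longrightarrow> x = y"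
  by (simp add: phi_Pair prod_eq_iff divide_inverse)

lemma dist_phi: "N > 0 \<Longrightarrow> dist (phi N a x) (phi N a y) = dist x y / real N"
proof -
  assume N: "N > 0"
  have "phi N a x - phi N a y = (1 / real N) *\<^sub>R (x - y)"
    by (simp add: phi_def algebra_simps)
  then show ?thesis using N by (simp add: dist_norm)
qed

lemma bound1:
  fixes h :: "real \<times> real \<Rightarrow> real"
  assumes "compact (h ` F)" "F \<noteq> {}" "N \<ge> 2"
    and dec: "\<And>x. x \<in> F \<Longrightarrow> \<exists>z\<in>F. \<exists>c::nat. c < N \<and> h x = (h z + real c) / real N"
  shows "\<forall>x\<in>F. 0 \<le> h x \<and> h x \<le> 1"
proof -
  have ne: "h ` F \<noteq> {}" using assms(2) by auto
  obtain s where s: "s \<in> F" "\<And>t. t \<in> F \<Longrightarrow> h t \<le> h s"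
    using compact_attains_sup[OF assms(1) ne] by auto
  obtain m where m: "m \<in> F" "\<And>t. t \<in> F \<Longrightarrow> h m \<le> h t"
    using compact_attains_inf[OF assms(1) ne] by auto
  have N: "real N \<ge> 2" using assms(3) by simp
  obtain z c where z: "z \<in> F" "c < N" "h s = (h z + real c) / real N" using dec[OF s(1)] by auto
  have "h s * real N = h z + real c" using z(3) N by (simp add: field_simps)
  moreover have "real c \<le> real N - 1" using z(2) by linarith
  moreover have "h z \<le> h s" using s(2) z(1) by auto
  ultimately have "h s * (real N - 1) \<le> real N - 1" by (simp add: algebra_simps)
  hence hs: "h s \<le> 1" using N by simp
  obtain z2 c2 where z2: "z2 \<in> F" "c2 < N" "h m = (h z2 + real c2) / real N" using dec[OF m(1)] by auto
  have "h m * real N = h z2 + real c2" using z2(3) N by (simp add: field_simps)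
  moreover have "h m \<le> h z2" using m(2) z2(1) by auto
  ultimately have "h m * (real N - 1) \<ge> 0" by (simp add: algebra_simps)
  hence hm: "h m \<ge> 0" using N by (simp add: zero_le_mult_iff)
  show ?thesis using hs hm s(2) m(2) by (meson order_trans)
qed

lemma coord:
  fixes s t :: real and a b ik jk N :: nat
  assumes "0 \<le> s" "s \<le> 1" "0 \<le> t" "t \<le> 1" "a < N" "b < N"
    and eq: "s + a + real N * ik = t + b + real N * jk"
  shows "(ik \<noteq> jk \<longrightarrow> s + ik = t + jk \<and> (s = 0 \<or> s = 1)) \<and> (ik = jk \<longrightarrow> s + ik = t + jk \<or> s = 0 \<or> s = 1)"
proof -
  have a: "real a \<le> real N - 1" "real b \<le> real N - 1" using assms(5,6) by linarith+
  consider "ik < jk" | "jk < ik" | "ik = jk" by linarith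
  then show ?thesis
  proof cases
    case 1
    define d where "d = jk - ik"
    have d: "jk = ik + d" "d \<ge> 1" using 1 unfolding d_def by auto
    have e: "s + a = t + b + real N * d" using eq d(1) by (simp add: algebra_simps)
    have "d = 1"
    proof (rule ccontr)
      assume "d \<noteq> 1" then have "real d \<ge> 2" using d(2) by linarith
      then have "real N * d \<ge> real N * 2" by (simp add: mult_left_mono)
      then show False using e a assms by linarith
    qed
    then have e1: "s + a = t + b + real N" using e by simp
    have "s = 1" "t = 0" "real b = 0" using e1 a assms of_nat_0_le_iff[of a] of_nat_0_le_iff[of b] by linarith+
    then show ?thesis using 1 d \<open>d = 1\<close> by auto
  next
    case 2
    define d where "d = ik - jk"
    have d: "ik = jk + d" "d \<ge> 1" using 2 unfolding d_def by auto
    have e: "s + a + real N * d = t + b" using eq d(1) by (simp add: algebra_simps)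
    have "d = 1"
    proof (rule ccontr)
      assume "d \<noteq> 1" then have "real d \<ge> 2" using d(2) by linarith
      then have "real N * d \<ge> real N * 2" by (simp add: mult_left_mono)
      then show False using e a assms by linarith
    qed
    then have e1: "s + a + real N = t + b" using e by simp
    have "s = 0" "t = 1" "real a = 0" using e1 a assms of_nat_0_le_iff[of a] of_nat_0_le_iff[of b] by linarith+
    then show ?thesis using 2 d \<open>d = 1\<close> by auto
  next
    case 3
    then have e: "s + a = t + b" using eq by simp
    consider "a = b" | "a < b" | "b < a" by linarith
    then show ?thesis
    proof cases
      case 1 then show ?thesis using e 3 by simp
    next
      case 2 then have "real a + 1 \<le> real b" by linarith
      then have "s = 1" using e assms by linarith
      then show ?thesis using 3 by simp
    next
      case 3 then have "real b + 1 \<le> real a" by linarith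
      then have "s = 0" using e assms by linarith
      then show ?thesis using \<open>ik = jk\<close> by simp
    qed
  qed
qed



lemma corner1:
  fixes q :: real and c N :: nat
  assumes "0 \<le> q" "q \<le> 1" "c < N" "N \<ge> 2" "(q + c) / N = 0 \<or> (q + c) / N = 1"
  shows "(q + c) / N = real c / (real N - 1)"
proof -
  have N: "real N \<ge> 2" using assms by simp
  show ?thesis
  proof (cases "(q + c) / N = 0")
    case True
    then have "q + c = 0" using N by (simp add: divide_eq_0_iff)
    then have "real c = 0" using assms by linarith
    then show ?thesis using True by simp
  next
    case False
    then have "(q + c) / N = 1" using assms by simp
    then have "q + c = N" using N by (simp add: divide_eq_1_iff)
    moreover have "real c \<le> real N - 1" using assms by linarith
    ultimately have "real c = real N - 1" using assms by linarith
    then show ?thesis using \<open>(q + c) / N = 1\<close> N by simp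
  qed
qed


lemma fix1: "(M::real) > 0 \<Longrightarrow> K = M + 1 \<Longrightarrow> (x / M + x) / K = x / M"
proof -
  assume M: "M > 0" and K: "K = M + 1"
  have K0: "K \<noteq> 0" using M K by simp
  have "x / M * K = x / M * M + x / M" by (simp add: K distrib_left)
  also have "x / M * M = x" using M by simp
  finally have "x / M + x = (x / M) * K" by simp
  then show ?thesis using K0 by (metis nonzero_mult_div_cancel_right)
qed

lemma phi_p: "N \<ge> 2 \<Longrightarrow> phi N c (real (fst c) / (real N - 1), real (snd c) / (real N - 1))
   = (real (fst c) / (real N - 1), real (snd c) / (real N - 1))"
proof -
  assume N: "N \<ge> 2"
  have M: "real N - 1 > 0" using N by simp
  have h: "(x / (real N - 1) + x) / real N = x / (real N - 1)" for x
    by (rule fix1[OF M]) simp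
  show ?thesis by (simp only: phi_Pair fst_conv snd_conv h)
qed

theorem mainTheorem14:
  fixes N :: nat and D :: "(nat \<times> nat) set" and F :: "(real \<times> real) set" and i :: "nat \<times> nat"
  assumes "gsc_digits N D"
    and "is_gsc_attractor N D F"
    and "connected F"
    and "i \<in> D"
    and "\<exists>!w. length w = 2 \<and> set w \<subseteq> D \<and>
           phiw N (i # w) ` F \<inter> (\<Union>j\<in>D - {i}. phi N j ` F) \<noteq> {}"
  shows "fragile N D F"
proof -
  have N2: "N \<ge> 2" and Dsub: "D \<subseteq> {0..<N} \<times> {0..<N}" and cardD: "1 < card D"
    using assms(1) unfolding gsc_digits_def by auto
  have N0: "N > 0" using N2 by simp
  have cF: "compact F" and neF: "F \<noteq> {}" and Feq: "F = (\<Union>a\<in>D. phi N a ` F)"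
    using assms(2) unfolding is_gsc_attractor_def by auto
  have Fmem: "(x \<in> F) = (x \<in> (\<Union>a\<in>D. phi N a ` F))" for x
    by (rule arg_cong[OF Feq])
  have finD: "finite D" by (rule finite_subset[OF Dsub]) simp
  have dig: "\<And>a. a \<in> D \<Longrightarrow> fst a < N \<and> snd a < N" using Dsub by auto
  have dec: "\<exists>a\<in>D. \<exists>z\<in>F. x = phi N a z" if "x \<in> F" for x
  proof -
    have "x \<in> (\<Union>a\<in>D. phi N a ` F)" using that Fmem[of x] by simp
    then show ?thesis by blast
  qed
  have phiF: "phi N a ` F \<subseteq> F" if "a \<in> D" for a
  proof
    fix y assume "y \<in> phi N a ` F"
    then have "y \<in> (\<Union>a\<in>D. phi N a ` F)" using that by blast
    then show "y \<in> F" using Fmem[of y] by simp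
  qed
  have Q1: "\<forall>x\<in>F. 0 \<le> fst x \<and> fst x \<le> 1"
  proof (rule bound1[OF _ neF N2])
    show "compact (fst ` F)" by (rule compact_continuous_image[OF continuous_on_fst cF]) (rule continuous_on_id)
    fix x assume "x \<in> F"
    then obtain a z where "a \<in> D" "z \<in> F" "x = phi N a z" using dec by blast
    then show "\<exists>z\<in>F. \<exists>c::nat. c < N \<and> fst x = (fst z + real c) / real N"
      using dig[of a] by (intro bexI[of _ z] exI[of _ "fst a"]) (auto simp: phi_Pair)
  qed
  have Q2: "\<forall>x\<in>F. 0 \<le> snd x \<and> snd x \<le> 1"
  proof (rule bound1[OF _ neF N2])
    show "compact (snd ` F)" by (rule compact_continuous_image[OF continuous_on_snd cF]) (rule continuous_on_id)
    fix x assume "x \<in> F"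
    then obtain a z where "a \<in> D" "z \<in> F" "x = phi N a z" using dec by blast
    then show "\<exists>z\<in>F. \<exists>c::nat. c < N \<and> snd x = (snd z + real c) / real N"
      using dig[of a] by (intro bexI[of _ z] exI[of _ "snd a"]) (auto simp: phi_Pair)
  qed
  define B where "B = (\<Union>j\<in>D - {i}. phi N j ` F)"
  define K where "K = {x\<in>F. phi N i x \<in> B}"
  define p where "p c = (real (fst c) / (real N - 1), real (snd c) / (real N - 1))" for c :: "nat \<times> nat"
  have ex1: "\<exists>!w. length w = 2 \<and> set w \<subseteq> D \<and> phiw N (i # w) ` F \<inter> B \<noteq> {}"
    using assms(5) unfolding B_def .
  obtain w0 where w0: "length w0 = 2 \<and> set w0 \<subseteq> D \<and> phiw N (i # w0) ` F \<inter> B \<noteq> {}"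
    and w0u: "\<And>w. length w = 2 \<and> set w \<subseteq> D \<and> phiw N (i # w) ` F \<inter> B \<noteq> {} \<Longrightarrow> w = w0"
  proof -
    obtain w0 where "length w0 = 2 \<and> set w0 \<subseteq> D \<and> phiw N (i # w0) ` F \<inter> B \<noteq> {}"
      "\<forall>y. length y = 2 \<and> set y \<subseteq> D \<and> phiw N (i # y) ` F \<inter> B \<noteq> {} \<longrightarrow> y = w0"
      by (rule ex1E[OF ex1]) (rule that)
    then show ?thesis using that by blast
  qed
  have l2: "length w0 = 2" using w0 by simp
  define u where "u = hd w0"
  define v where "v = hd (tl w0)"
  have uv: "w0 = [u, v]" unfolding u_def v_def using l2
    by (cases w0; cases "tl w0") auto
  have uD: "u \<in> D" and vD: "v \<in> D" using w0 uv by auto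
  have U: "u' = u \<and> v' = v" if hU: "x \<in> K" "u' \<in> D" "v' \<in> D" "x \<in> phi N u' ` phi N v' ` F" for x u' v'
  proof -
    obtain z where z: "z \<in> F" "x = phi N u' (phi N v' z)" using hU(4) by blast
    have "phiw N (i # [u', v']) z = phi N i x" using z(2) by simp
    then have "phi N i x \<in> phiw N (i # [u', v']) ` F" using z(1) by (metis image_eqI)
    moreover have "phi N i x \<in> B" using hU(1) unfolding K_def by simp
    ultimately have ne: "phiw N (i # [u', v']) ` F \<inter> B \<noteq> {}" by blast
    have "[u', v'] = w0" by (rule w0u) (use ne hU(2,3) in simp)
    then show ?thesis using uv by simp
  qed
  have L: "\<exists>x'. x = phi N u x' \<and> x' \<in> phi N v ` F \<and> (x' \<in> K \<or> x' = p v)" if xK: "x \<in> K" for x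
  proof -
    have xF: "x \<in> F" and "phi N i x \<in> B" using xK K_def by auto
    then obtain j y where j: "j \<in> D" "j \<noteq> i" and yF: "y \<in> F" and ij: "phi N i x = phi N j y"
      unfolding B_def by auto
    obtain a z where a: "a \<in> D" "z \<in> F" "x = phi N a z" using dec[OF xF] by blast
    obtain c z' where c: "c \<in> D" "z' \<in> F" "z = phi N c z'" using dec[OF a(2)] by blast
    have "a = u \<and> c = v" using U[OF xK a(1) c(1)] a c by auto
    then have xz: "x = phi N u z" and zv: "z \<in> phi N v ` F" using a c by auto
    obtain b y' where b: "b \<in> D" "y' \<in> F" "y = phi N b y'" using dec[OF yF] by blast
    have eq: "phi N i (phi N u z) = phi N j (phi N b y')" using ij xz b by simp
    have e1: "fst z + real (fst u) + real N * real (fst i) = fst y' + real (fst b) + real N * real (fst j)"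
      using eq N0 by (simp add: phi_Pair prod_eq_iff field_simps)
    have e2: "snd z + real (snd u) + real N * real (snd i) = snd y' + real (snd b) + real N * real (snd j)"
      using eq N0 by (simp add: phi_Pair prod_eq_iff field_simps)
    have zF: "z \<in> F" using a by simp
    have z01: "0 \<le> fst z" "fst z \<le> 1" "0 \<le> snd z" "snd z \<le> 1" using Q1 Q2 zF by auto
    have y01: "0 \<le> fst y'" "fst y' \<le> 1" "0 \<le> snd y'" "snd y' \<le> 1" using Q1 Q2 b(2) by auto
    have du: "fst u < N" "snd u < N" using dig[OF uD] by auto
    have db: "fst b < N" "snd b < N" using dig[OF b(1)] by auto
    note C1 = coord[OF z01(1,2) y01(1,2) du(1) db(1) e1]
    note C2 = coord[OF z01(3,4) y01(3,4) du(2) db(2) e2]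
    show ?thesis
    proof (cases "fst z + fst i = fst y' + fst j \<and> snd z + snd i = snd y' + snd j")
      case True
      then have "phi N i z = phi N j y'" by (simp add: phi_Pair)
      then have "z \<in> K" using zF b(2) j unfolding K_def B_def by blast
      then show ?thesis using xz zv by blast
    next
      case False
      have ij2: "fst i \<noteq> fst j \<or> snd i \<noteq> snd j" using j(2) by (auto simp: prod_eq_iff)
      have cz: "(fst z = 0 \<or> fst z = 1) \<and> (snd z = 0 \<or> snd z = 1)"
        using False C1 C2 ij2 by auto
      obtain q where q: "q \<in> F" "z = phi N v q" using zv by blast
      have fz: "fst z = (fst q + real (fst v)) / real N" and sz: "snd z = (snd q + real (snd v)) / real N"
        using q(2) by (simp_all add: phi_Pair)
      have q01: "0 \<le> fst q" "fst q \<le> 1" "0 \<le> snd q" "snd q \<le> 1" using Q1 Q2 q(1) by auto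
      have dv: "fst v < N" "snd v < N" using dig[OF vD] by auto
      have "(fst q + real (fst v)) / real N = real (fst v) / (real N - 1)"
        by (rule corner1[OF q01(1,2) dv(1) N2]) (use cz fz in simp)
      then have "fst z = real (fst v) / (real N - 1)" using fz by simp
      moreover have "(snd q + real (snd v)) / real N = real (snd v) / (real N - 1)"
        by (rule corner1[OF q01(3,4) dv(2) N2]) (use cz sz in simp)
      then have "snd z = real (snd v) / (real N - 1)" using sz by simp
      ultimately have "z = p v" by (simp add: p_def prod_eq_iff)
      then show ?thesis using xz zv by blast
    qed
  qed
  have KF: "K \<subseteq> F" unfolding K_def by auto
  have pQ: "0 \<le> fst (p c) \<and> fst (p c) \<le> 1 \<and> 0 \<le> snd (p c) \<and> snd (p c) \<le> 1" if "c \<in> D" for c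
    using dig[OF that] N2 by (simp add: p_def field_simps)
  have pfix: "phi N c (p c) = p c" for c
    unfolding p_def by (rule phi_p[OF N2])
  have dist2: "dist x y \<le> 2" if "0 \<le> fst x" "fst x \<le> 1" "0 \<le> snd x" "snd x \<le> 1"
    "0 \<le> fst y" "fst y \<le> 1" "0 \<le> snd y" "snd y \<le> 1" for x y :: "real \<times> real"
  proof -
    have "dist x y = sqrt (dist (fst x) (fst y) ^ 2 + dist (snd x) (snd y) ^ 2)"
      by (cases x, cases y) (simp add: dist_Pair_Pair)
    also have "\<dots> \<le> sqrt 4"
    proof (rule real_sqrt_le_mono)
      have h1: "dist (fst x) (fst y) \<le> 1" "dist (snd x) (snd y) \<le> 1"
        using that by (auto simp: dist_real_def)
      have h2: "dist (fst x) (fst y) ^ 2 \<le> 1" "dist (snd x) (snd y) ^ 2 \<le> 1"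
        using h1 by (auto intro!: power_le_one)
      show "dist (fst x) (fst y) ^ 2 + dist (snd x) (snd y) ^ 2 \<le> 4" using h2 by linarith
    qed
    also have "sqrt 4 = (2::real)" by (rule real_sqrt_unique) auto
    finally show ?thesis .
  qed
  obtain q0 where q0: "\<And>x. x \<in> K \<Longrightarrow> x = q0"
  proof (cases "u = v")
    case True
    have bnd: "\<forall>x\<in>K. dist x (p u) \<le> 2 / real N ^ n" for n
    proof (induction n)
      case 0
      show ?case
      proof
        fix x assume "x \<in> K"
        then have "x \<in> F" using KF by blast
        then show "dist x (p u) \<le> 2 / real N ^ 0" using dist2[of x "p u"] Q1 Q2 pQ[OF uD] by simp
      qed
    next
      case (Suc n)
      show ?case
      proof
        fix x assume xK: "x \<in> K"
        obtain x' where x': "x = phi N u x'" "x' \<in> K \<or> x' = p v" using L[OF xK] by blast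
        show "dist x (p u) \<le> 2 / real N ^ Suc n"
        proof (cases "x' = p v")
          case True
          then have "x = p u" using x' pfix True \<open>u = v\<close> by simp
          then show ?thesis by simp
        next
          case False
          then have "x' \<in> K" using x' by simp
          have "dist x (p u) = dist x' (p u) / real N"
            using x'(1) dist_phi[OF N0, of u x' "p u"] pfix by simp
          also have "\<dots> \<le> (2 / real N ^ n) / real N"
            by (rule divide_right_mono) (use Suc.IH \<open>x' \<in> K\<close> in auto)
          also have "\<dots> = 2 / real N ^ Suc n" by simp
          finally show ?thesis .
        qed
      qed
    qed
    show ?thesis
    proof (rule that[of "p u"])
      fix x assume xK: "x \<in> K"
      show "x = p u"
      proof (rule ccontr)
        assume "x \<noteq> p u"
        then have d: "dist x (p u) > 0" by simp
        have "real N > 1" using N2 by simp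
        then obtain n where n: "2 / dist x (p u) < real N ^ n" using real_arch_pow by blast
        have "dist x (p u) \<le> 2 / real N ^ n" using bnd xK by blast
        then have "dist x (p u) * real N ^ n \<le> 2" using N0 by (simp add: field_simps)
        moreover have "2 < dist x (p u) * real N ^ n" using n d by (simp add: field_simps)
        ultimately show False by simp
      qed
    qed
  next
    case False
    show ?thesis
    proof (rule that[of "phi N u (p v)"])
      fix x assume xK: "x \<in> K"
      obtain x' where x': "x = phi N u x'" "x' \<in> phi N v ` F" "x' \<in> K \<or> x' = p v"
        using L[OF xK] by blast
      have "x' \<notin> K"
      proof
        assume "x' \<in> K"
        then obtain x'' where x'': "x' = phi N u x''" "x'' \<in> phi N v ` F" using L by blast
        have "x'' \<in> F" using x''(2) phiF[OF vD] by blast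
        then have "x \<in> phi N u ` phi N u ` F" using x'(1) x''(1) by blast
        then have "u = v" using U[OF xK uD uD] by simp
        then show False using False by simp
      qed
      then show "x = phi N u (p v)" using x' by simp
    qed
  qed
  have closed1: "closed (phi N i ` F)"
    by (intro compact_imp_closed compact_continuous_image[OF _ cF]) (auto simp: phi_def intro!: continuous_intros)
  have closedB: "closed B" unfolding B_def
    by (intro compact_imp_closed compact_UN) (use finD in \<open>auto simp: phi_def intro!: compact_continuous_image[OF _ cF] continuous_intros\<close>)
  obtain j where j: "j \<in> D" "j \<noteq> i"
  proof -
    have "D - {i} \<noteq> {}"
    proof
      assume "D - {i} = {}"
      then have "D \<subseteq> {i}" by blast
      then have "card D \<le> 1" using card_mono[of "{i}" D] by simp
      then show False using cardD by simp
    qed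
    then show ?thesis using that by blast
  qed
  have FU: "x \<in> F \<longleftrightarrow> x \<in> phi N i ` F \<or> x \<in> B" for x
  proof -
    have "(\<Union>a\<in>D. phi N a ` F) = phi N i ` F \<union> B" unfolding B_def using assms(4) by blast
    then show ?thesis using Fmem[of x] by simp
  qed
  have nonemp: "phi N i ` F \<inter> B \<noteq> {}"
  proof
    assume dis: "phi N i ` F \<inter> B = {}"
    obtain x0 where x0: "x0 \<in> F" using neF by blast
    have "phi N i x0 \<in> phi N i ` F \<inter> F" using x0 phiF[OF assms(4)] by blast
    then have "phi N i ` F \<inter> F \<noteq> {}" by blast
    moreover have "phi N j x0 \<in> B \<inter> F" using x0 phiF[OF j(1)] j unfolding B_def by blast
    then have "B \<inter> F \<noteq> {}" by blast
    moreover have "F \<subseteq> phi N i ` F \<union> B" using FU by blast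
    moreover have "\<not> (closed (phi N i ` F) \<and> closed B \<and> F \<subseteq> phi N i ` F \<union> B \<and>
        phi N i ` F \<inter> B \<inter> F = {} \<and> phi N i ` F \<inter> F \<noteq> {} \<and> B \<inter> F \<noteq> {})"
      using assms(3) unfolding connected_closed by blast
    ultimately show False
      using closed1 closedB dis by blast
  qed
  have eqP: "phi N i ` F \<inter> B = {phi N i q0}"
  proof -
    have sub: "phi N i ` F \<inter> B \<subseteq> {phi N i q0}"
    proof
      fix z assume "z \<in> phi N i ` F \<inter> B"
      then obtain x where "x \<in> F" "z = phi N i x" "phi N i x \<in> B" by blast
      then have "x \<in> K" unfolding K_def by blast
      then show "z \<in> {phi N i q0}" using q0 \<open>z = phi N i x\<close> by simp
    qed
    obtain z where z: "z \<in> phi N i ` F \<inter> B" using nonemp by blast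
    then have "z = phi N i q0" using sub by blast
    then show ?thesis using sub z by blast
  qed
  have s1: "(\<Union>a\<in>{i}. phi N a ` F) = phi N i ` F" by simp
  have last: "(\<Union>a\<in>{i}. phi N a ` F) \<inter> (\<Union>a\<in>D - {i}. phi N a ` F) = {phi N i q0}"
    unfolding s1 using eqP unfolding B_def .
  have d1: "{i} \<union> (D - {i}) = D" using assms(4) by blast
  have d2: "D - {i} \<noteq> {}" using j by blast
  show ?thesis unfolding fragile_def
    apply (rule exI[of _ "{i}"], rule exI[of _ "D - {i}"])
    apply (intro conjI d1 d2 exI[of _ "phi N i q0"] last)
    apply blast
    apply simp
    done
qed

end
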